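(* Let $Q:(-\infty,-1)\to(-\infty,0)$ be the inverse of the strictly increasing function $G\mapsto G-e^G$ on $(-\infty,0)$, and define $R:\mathbb{R}\to\mathbb{R}$ by $R(V)=-2(1-e^{Q(V)})^2$ for $V<-1$ and $R(V)=4(V+1)$ for $V\ge -1$. Fix $m<-1$. For $n\in\mathbb{R}$ let $V(t;n)$ denote the unique solution of $V''+3V'=R(V)$, $t>0$, $V(0)=m$, $V'(0)=n$ (prime denoting $d/dt$, $V_t=dV/dt$). Define $\beta^0=\{n\in\mathbb{R}: V_t(t;n)>0 \text{ and } V(t;n)\le -1 \text{ for all } t>0\}$. If $n\in\beta^0$, then $V(t;n)\to -1$ as $t\to\infty$. *)

theory Defs
  imports "HOL-Analysis.Analysis"
begin

definition Q :: "real \<Rightarrow> real" where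
  "Q = inv_into {..<0} (\<lambda>G. G - exp G)"

definition R :: "real \<Rightarrow> real" where
  "R V = (if V < -1 then -2 * (1 - exp (Q V))^2 else 4 * (V + 1))"

definition ivp_sol :: "real \<Rightarrow> real \<Rightarrow> (real \<Rightarrow> real) \<Rightarrow> (real \<Rightarrow> real) \<Rightarrow> bool" where
  "ivp_sol m n V V' \<longleftrightarrow>
     V 0 = m \<and> V' 0 = n \<and>
     (\<forall>t\<ge>0. (V has_real_derivative V' t) (at t within {0..})) \<and>
     continuous_on {0..} V' \<and>
     (\<forall>t>0. (V' has_real_derivative (R (V t) - 3 * V' t)) (at t))"

end

theory Submission
  imports Defs
begin

lemma f_strict: assumes "G1 < G2" "G2 \<le> (0::real)" shows "G1 - exp G1 < G2 - exp G2"
proof -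
  have "\<And>x. G1 \<le> x \<Longrightarrow> x \<le> G2 \<Longrightarrow> ((\<lambda>G. G - exp G) has_real_derivative (1 - exp x)) (at x)"
    by (auto intro!: derivative_eq_intros)
  from MVT2[OF assms(1) this] obtain z where z: "G1 < z" "z < G2"
    "(G2 - exp G2) - (G1 - exp G1) = (G2 - G1) * (1 - exp z)" by auto
  have "exp z < 1" using z assms by simp
  then have "(G2 - G1) * (1 - exp z) > 0" using assms by simp
  with z show ?thesis by linarith
qed

lemma Q_props: assumes "y < -1" shows "Q y < 0" "Q y - exp (Q y) = y"
proof -
  have "continuous_on {y..0} (\<lambda>G. G - exp G)" by (intro continuous_intros)
  moreover have "y - exp y \<le> y" by simp
  ultimately obtain x where x: "y \<le> x" "x \<le> 0" "x - exp x = y"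
    using IVT'[of "\<lambda>G. G - exp G" y y 0] assms by auto
  have "x \<noteq> 0" using x assms by auto
  with x have "y \<in> (\<lambda>G. G - exp G) ` {..<0}" by force
  then have "Q y \<in> {..<0} \<and> Q y - exp (Q y) = y"
    unfolding Q_def by (metis f_inv_into_f inv_into_into)
  then show "Q y < 0" "Q y - exp (Q y) = y" by auto
qed

lemma Q_mono: assumes "y1 \<le> y2" "y2 < -1" shows "Q y1 \<le> Q y2"
proof (rule ccontr)
  assume "\<not> ?thesis"
  then have "Q y2 < Q y1" by simp
  from f_strict[OF this] Q_props[of y1] Q_props[of y2] assms show False by simp
qed

lemma R_bound: assumes "v \<le> a" "a < -1" shows "R v \<le> R a" "R a < 0"
proof -
  have q: "Q v \<le> Q a" "Q a < 0" using Q_mono Q_props assms by auto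
  have e: "exp (Q v) \<le> exp (Q a)" "exp (Q a) < 1" using q by auto
  have "(1 - exp (Q a))^2 \<le> (1 - exp (Q v))^2"
    using e by (intro power_mono) auto
  then show "R v \<le> R a" using assms unfolding R_def by auto
  show "R a < 0" using e assms unfolding R_def by auto
qed

theorem lemma4p4:
  fixes m n :: real and V V' :: "real \<Rightarrow> real"
  assumes "m < -1"
    and "ivp_sol m n V V'"
    and "\<forall>t>0. V' t > 0 \<and> V t \<le> -1"
  shows "(V \<longlongrightarrow> -1) at_top"
proof -
  have dV: "\<And>t. t > 0 \<Longrightarrow> (V has_real_derivative V' t) (at t)"
  proof -
    fix t :: real assume t: "t > 0"
    have "(V has_real_derivative V' t) (at t within {0..})" using assms(2) t unfolding ivp_sol_def by auto
    moreover have "at t within {0..} = at t" using t by (intro at_within_interior) auto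
    ultimately show "(V has_real_derivative V' t) (at t)" by simp
  qed
  have dV': "\<And>t. t > 0 \<Longrightarrow> (V' has_real_derivative (R (V t) - 3 * V' t)) (at t)"
    using assms(2) unfolding ivp_sol_def by auto
  have mono: "\<And>s t. 0 < s \<Longrightarrow> s \<le> t \<Longrightarrow> V s \<le> V t"
  proof -
    fix s t :: real assume st: "0 < s" "s \<le> t"
    show "V s \<le> V t"
    proof (rule DERIV_nonneg_imp_nondecreasing[OF st(2)])
      fix x assume x: "s \<le> x" "x \<le> t"
      then have "x > 0" using st by auto
      then show "\<exists>y. (V has_real_derivative y) (at x) \<and> 0 \<le> y"
        using dV assms(3) by (intro exI[of _ "V' x"]) (auto intro: less_imp_le)
    qed
  qed
  have key: "\<exists>t0>0. V t0 > a" if a: "a < -1" for a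
  proof (rule ccontr)
    assume "\<not> ?thesis"
    then have le: "\<And>t. t > 0 \<Longrightarrow> V t \<le> a" by force
    define c where "c = R a"
    have c: "c < 0" using R_bound[OF _ a] c_def by auto
    define t where "t = 1 + (V' 1 + 1) / (- c)"
    have V1: "V' 1 > 0" using assms(3) by auto
    have t1: "1 < t" unfolding t_def using c V1 by (simp add: field_simps)
    have "\<And>x. 1 \<le> x \<Longrightarrow> x \<le> t \<Longrightarrow> (V' has_real_derivative (R (V x) - 3 * V' x)) (at x)"
      using dV' by auto
    from MVT2[OF t1 this] obtain z where z: "1 < z" "z < t"
      "V' t - V' 1 = (t - 1) * (R (V z) - 3 * V' z)" by auto
    have "R (V z) \<le> c" using R_bound[OF le a] z c_def by auto
    moreover have "V' z > 0" using assms(3) z by auto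
    ultimately have "R (V z) - 3 * V' z \<le> c" by linarith
    then have "(t - 1) * (R (V z) - 3 * V' z) \<le> (t - 1) * c"
      using t1 by (intro mult_left_mono) auto
    moreover have "(t - 1) * c = - (V' 1 + 1)" unfolding t_def using c by (simp add: field_simps)
    ultimately have "V' t \<le> -1" using z by linarith
    moreover have "V' t > 0" using assms(3) t1 by auto
    ultimately show False by linarith
  qed
  show ?thesis
  proof (rule order_tendstoI)
    fix a :: real assume a: "a < -1"
    obtain t0 where t0: "t0 > 0" "V t0 > a" using key[OF a] by auto
    show "eventually (\<lambda>t. a < V t) at_top"
      using eventually_ge_at_top[of t0]
      by eventually_elim (use mono t0 in \<open>fastforce\<close>)
  next
    fix a :: real assume a: "-1 < a"
    show "eventually (\<lambda>t. V t < a) at_top"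
      using eventually_gt_at_top[of 0]
      by eventually_elim (use assms(3) a in \<open>fastforce\<close>)
  qed
qed

end
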